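(* There is an absolute constant $C$ such that the following holds for every integer $n\ge 2$: if $(x_1,\dots,x_n)\in A_n$ is a point at which $S_n$ attains its maximum over $A_n$ and $x_1=n$, then $S_n(x_1,\dots,x_n)\le n^3+Cn^2$.
   Context: For an integer $n\ge 2$, $A_n$ is the set of integer vectors $(x_1,\dots,x_n)\in\mathbb{Z}^n$ such that $n\ge x_1\ge x_2\ge\cdots\ge x_n\ge 0$, $\sum_{i=1}^k x_i\le 2n+6k-16$ for every $k\in\{1,\dots,n\}$, and $\sum_{i=1}^n x_i\le 6n-12$. For an integer $m\ge 2$, $S_m:\mathbb{R}^m\to\mathbb{R}$ is defined by $S_m(x_1,\dots,x_m)=\sum_{i=1}^{m-1}\sum_{j=i+1}^{m} x_i x_j^2$. *)

theory Defs
  imports Complex_Main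
begin

text \<open>Vectors (x_1,...,x_n) are represented as functions nat => int with
  indices 1..n; entries outside 1..n are fixed to 0 so that A n is a set of
  canonical representatives of Z^n.\<close>

definition A :: "nat \<Rightarrow> (nat \<Rightarrow> int) set" where
  "A n = {x. (\<forall>i. i \<notin> {1..n} \<longrightarrow> x i = 0)
           \<and> int n \<ge> x 1
           \<and> (\<forall>i\<in>{1..<n}. x i \<ge> x (Suc i))
           \<and> x n \<ge> 0
           \<and> (\<forall>k\<in>{1..n}. (\<Sum>i=1..k. x i) \<le> 2 * int n + 6 * int k - 16)
           \<and> (\<Sum>i=1..n. x i) \<le> 6 * int n - 12}"

definition S :: "nat \<Rightarrow> (nat \<Rightarrow> real) \<Rightarrow> real" where
  "S m x = (\<Sum>i=1..m-1. \<Sum>j=i+1..m. x i * (x j)^2)"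

end

theory Submission imports Defs begin

lemma swap_sum:
  fixes f :: "nat \<Rightarrow> nat \<Rightarrow> real"
  shows "(\<Sum>i=1..m-1. \<Sum>j=i+1..m. f i j) = (\<Sum>j=1..m. \<Sum>i=1..j-1. f i j)"
proof (induction m)
  case 0
  then show ?case by simp
next
  case (Suc m)
  have A: "(\<Sum>i=1..m. \<Sum>j=i+1..Suc m. f i j) = (\<Sum>i=1..m. (\<Sum>j=i+1..m. f i j) + f i (Suc m))"
    by (rule sum.cong) auto
  have B: "(\<Sum>i=1..m. \<Sum>j=i+1..m. f i j) = (\<Sum>i=1..m-1. \<Sum>j=i+1..m. f i j)"
  proof (cases m)
    case 0 then show ?thesis by simp
  next
    case (Suc k) then show ?thesis by (simp add: sum.atLeast_Suc_atMost_Suc_shift)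
  qed
  show ?case using Suc.IH A B by (simp add: sum.distrib)
qed

lemma abel_aux:
  fixes w g :: "nat \<Rightarrow> real"
  assumes dec: "\<And>k. m \<le> k \<Longrightarrow> w (Suc k) \<le> w k"
    and nn: "\<And>k. w k \<ge> 0"
    and bnd: "\<And>k. m \<le> k \<Longrightarrow> k \<le> N \<Longrightarrow> (\<Sum>i=m..k. g i) \<le> B"
    and "m \<le> N"
  shows "(\<Sum>j=m..N. w j * g j) \<le> B * (w m - w (Suc N)) + w (Suc N) * (\<Sum>i=m..N. g i)"
  using assms(4) bnd
proof (induction N rule: dec_induct)
  case base
  have "0 \<le> (w m - w (Suc m)) * (B - g m)" using base dec[of m] by simp
  then show ?case by (simp add: algebra_simps)
next
  case (step n)
  have IH: "(\<Sum>j=m..n. w j * g j) \<le> B * (w m - w (Suc n)) + w (Suc n) * (\<Sum>i=m..n. g i)"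
    using step by auto
  have G: "(\<Sum>i=m..Suc n. g i) \<le> B" using step.prems[of "Suc n"] step.hyps by linarith
  have d: "w (Suc (Suc n)) \<le> w (Suc n)" using dec step by auto
  have "0 \<le> (w (Suc n) - w (Suc (Suc n))) * (B - (\<Sum>i=m..Suc n. g i))"
    using G d by simp
  moreover have "(\<Sum>i=m..Suc n. g i) = (\<Sum>i=m..n. g i) + g (Suc n)"
    using step by simp
  moreover have "(\<Sum>j=m..Suc n. w j * g j) = (\<Sum>j=m..n. w j * g j) + w (Suc n) * g (Suc n)"
    using step by simp
  ultimately show ?case using IH by (simp add: algebra_simps)
qed

lemma abel:
  fixes w g :: "nat \<Rightarrow> real"
  assumes dec: "\<And>k. m \<le> k \<Longrightarrow> w (Suc k) \<le> w k"
    and nn: "\<And>k. w k \<ge> 0"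
    and bnd: "\<And>k. m \<le> k \<Longrightarrow> k \<le> N \<Longrightarrow> (\<Sum>i=m..k. g i) \<le> B"
    and B: "B \<ge> 0"
  shows "(\<Sum>j=m..N. w j * g j) \<le> B * w m"
proof (cases "m \<le> N")
  case True
  have "(\<Sum>j=m..N. w j * g j) \<le> B * (w m - w (Suc N)) + w (Suc N) * (\<Sum>i=m..N. g i)"
    using abel_aux[of m w N g B] dec nn bnd True by blast
  also have "\<dots> \<le> B * (w m - w (Suc N)) + w (Suc N) * B"
    using bnd[of N] True nn[of "Suc N"] by (simp add: mult_left_mono)
  finally show ?thesis by (simp add: algebra_simps)
next
  case False
  then show ?thesis using B nn[of m] by simp
qed

lemma main_bound:
  fixes n :: nat and x :: "nat \<Rightarrow> int"
  assumes xA: "x \<in> A n" and x1: "x 1 = int n" and n2: "n \<ge> 2"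
  shows "S n (\<lambda>i. real_of_int (x i)) \<le> (real n)^3 + 396 * (real n)^2"
proof -
  define y where "y i = real_of_int (x i)" for i
  have F1: "\<And>i. i \<notin> {1..n} \<Longrightarrow> y i = 0" using xA unfolding A_def y_def by auto
  have F2: "y 1 = real n" using x1 unfolding y_def by simp
  have F3: "\<And>i. i \<in> {1..<n} \<Longrightarrow> y (Suc i) \<le> y i" using xA unfolding A_def y_def by auto
  have F4: "y n \<ge> 0" using xA unfolding A_def y_def by auto
  have F5: "\<And>k. k \<in> {1..n} \<Longrightarrow> (\<Sum>i=1..k. y i) \<le> 2 * real n + 6 * real k - 16"
  proof -
    fix k assume k: "k \<in> {1..n}"
    have "(\<Sum>i=1..k. x i) \<le> 2 * int n + 6 * int k - 16" using xA k unfolding A_def by auto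
    then have "real_of_int (\<Sum>i=1..k. x i) \<le> real_of_int (2 * int n + 6 * int k - 16)" by linarith
    then show "(\<Sum>i=1..k. y i) \<le> 2 * real n + 6 * real k - 16" unfolding y_def by simp
  qed
  have F6: "(\<Sum>i=1..n. y i) \<le> 6 * real n - 12"
  proof -
    have "(\<Sum>i=1..n. x i) \<le> 6 * int n - 12" using xA unfolding A_def by auto
    then have "real_of_int (\<Sum>i=1..n. x i) \<le> real_of_int (6 * int n - 12)" by linarith
    then show ?thesis unfolding y_def by simp
  qed
  have D1: "\<And>k. k \<ge> 1 \<Longrightarrow> y (Suc k) \<le> y k"
  proof -
    fix k :: nat assume k: "k \<ge> 1"
    show "y (Suc k) \<le> y k"
    proof (cases "k < n")
      case True then show ?thesis using F3 k by auto
    next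
      case False
      then have "y (Suc k) = 0" using F1 by auto
      moreover have "k = n \<or> y k = 0" using False F1[of k] k by auto
      ultimately show ?thesis using F4 by auto
    qed
  qed
  have D3: "\<And>i j. 1 \<le> i \<Longrightarrow> i \<le> j \<Longrightarrow> y j \<le> y i"
  proof -
    fix i j :: nat assume i: "1 \<le> i" and ij: "i \<le> j"
    show "y j \<le> y i" using ij
    proof (induction j rule: dec_induct)
      case base then show ?case by simp
    next
      case (step j) then show ?case using D1[of j] i by linarith
    qed
  qed
  have D2: "\<And>k. y k \<ge> 0"
  proof -
    fix k show "y k \<ge> 0"
    proof (cases "k \<in> {1..n}")
      case True then show ?thesis using D3[of k n] F4 by auto
    next
      case False then show ?thesis using F1 by simp
    qed
  qed
  define a where "a = y 2"
  define b where "b = real n - a"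
  have a_le: "a \<le> real n" using D1[of 1] F2 unfolding a_def by (simp add: numeral_2_eq_2)
  have a_ge: "a \<ge> 0" using D2 unfolding a_def by simp
  have b_ge: "b \<ge> 0" and b_le: "b \<le> real n" using a_le a_ge unfolding b_def by auto
  have y3: "y 3 \<le> a" using D1[of 2] unfolding a_def by (simp add: numeral_3_eq_3 numeral_2_eq_2)
  have split12: "\<And>k. k \<ge> 2 \<Longrightarrow> (\<Sum>i=1..k. y i) = real n + a + (\<Sum>i=3..k. y i)"
  proof -
    fix k :: nat assume k: "k \<ge> 2"
    have "(\<Sum>i=1..k. y i) = y 1 + (\<Sum>i=2..k. y i)" using k sum.atLeast_Suc_atMost[of 1 k y] by (simp add: numeral_2_eq_2)
    also have "(\<Sum>i=2..k. y i) = y 2 + (\<Sum>i=3..k. y i)" using k sum.atLeast_Suc_atMost[of 2 k y]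
      by simp
    finally show "(\<Sum>i=1..k. y i) = real n + a + (\<Sum>i=3..k. y i)" using F2 unfolding a_def by simp
  qed
  define R where "R = (\<Sum>i=3..n. y i)"
  have R_le: "R \<le> 6 * real n" using F6 split12[OF n2] a_ge unfolding R_def by linarith
  have R_ge: "R \<ge> 0" unfolding R_def using D2 by (simp add: sum_nonneg)
  have D7: "\<And>k. 3 \<le> k \<Longrightarrow> k \<le> n \<Longrightarrow> (\<Sum>i=3..k. y i) \<le> b + 6 * real k - 16"
  proof -
    fix k :: nat assume k: "3 \<le> k" "k \<le> n"
    have "(\<Sum>i=1..k. y i) \<le> 2 * real n + 6 * real k - 16" using F5 k by auto
    then show "(\<Sum>i=3..k. y i) \<le> b + 6 * real k - 16" using split12[of k] k unfolding b_def by auto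
  qed
  have D8: "\<And>k. 3 \<le> k \<Longrightarrow> k \<le> n \<Longrightarrow> (\<Sum>i=3..k. y i - 6) \<le> b"
  proof -
    fix k :: nat assume k: "3 \<le> k" "k \<le> n"
    have "(\<Sum>i=3..k. y i - 6) = (\<Sum>i=3..k. y i) - 6 * real (k - 2)"
      by (simp add: sum_subtractf)
    moreover have "real (k - 2) = real k - 2" using k by auto
    ultimately show "(\<Sum>i=3..k. y i - 6) \<le> b" using D7[OF k] by linarith
  qed
  have D9: "(\<Sum>j=3..n. y j * (y j - 6)) \<le> b * y 3"
    by (rule abel) (use D1 D2 D8 b_ge in auto)
  define Q where "Q = (\<Sum>j=3..n. (y j)^2)"
  have D10: "Q \<le> a * b + 36 * real n"
  proof -
    have "Q = (\<Sum>j=3..n. y j * (y j - 6)) + 6 * R"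
      unfolding Q_def R_def by (simp add: power2_eq_square algebra_simps sum.distrib sum_distrib_left sum_subtractf)
    moreover have "b * y 3 \<le> b * a" using y3 b_ge by (simp add: mult_left_mono)
    ultimately show ?thesis using D9 R_le by (simp add: algebra_simps)
  qed
  have D11: "\<And>j. 3 \<le> j \<Longrightarrow> j \<le> n \<Longrightarrow> real j * y j \<le> 9 * real n"
  proof -
    fix j :: nat assume j: "3 \<le> j" "j \<le> n"
    have "(\<Sum>i=3..j. y j) \<le> (\<Sum>i=3..j. y i)" by (rule sum_mono) (use D3 in auto)
    moreover have "(\<Sum>i=3..j. y j) = (real j - 2) * y j" using j by auto
    ultimately have "(real j - 2) * y j \<le> b + 6 * real j - 16" using D7[OF j] by linarith
    moreover have "y j \<le> a" using D3[of 2 j] j unfolding a_def by auto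
    ultimately show "real j * y j \<le> 9 * real n" using b_le a_le j by (simp add: algebra_simps)
  qed
  have D12: "(\<Sum>j=3..n. real j * (y j)^2) \<le> 54 * (real n)^2"
  proof -
    have "(\<Sum>j=3..n. real j * (y j)^2) \<le> (\<Sum>j=3..n. 9 * real n * y j)"
    proof (rule sum_mono)
      fix j assume j: "j \<in> {3..n}"
      have "(real j * y j) * y j \<le> (9 * real n) * y j" using D11[of j] j D2[of j] by (simp add: mult_right_mono)
      then show "real j * (y j)^2 \<le> 9 * real n * y j" by (simp add: power2_eq_square algebra_simps)
    qed
    also have "\<dots> = 9 * real n * R" unfolding R_def by (simp add: sum_distrib_left)
    also have "\<dots> \<le> 9 * real n * (6 * real n)" using mult_left_mono[OF R_le, of "9 * real n"] by simp
    finally show ?thesis by (simp add: power2_eq_square)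
  qed
  have Sform: "S n y = (\<Sum>j=1..n. (y j)^2 * (\<Sum>i=1..j-1. y i))"
  proof -
    have "S n y = (\<Sum>j=1..n. \<Sum>i=1..j-1. y i * (y j)^2)"
      unfolding S_def by (rule swap_sum)
    also have "\<dots> = (\<Sum>j=1..n. (y j)^2 * (\<Sum>i=1..j-1. y i))"
      by (simp add: sum_distrib_left mult.commute)
    finally show ?thesis .
  qed
  have "(\<Sum>j=1..n. (y j)^2 * (\<Sum>i=1..j-1. y i)) = (y 1)^2 * 0 + (y 2)^2 * y 1 + (\<Sum>j=3..n. (y j)^2 * (\<Sum>i=1..j-1. y i))"
    using n2 by (simp add: sum.atLeast_Suc_atMost numeral_3_eq_3 numeral_2_eq_2)
  also have "(\<Sum>j=3..n. (y j)^2 * (\<Sum>i=1..j-1. y i)) \<le> (\<Sum>j=3..n. (y j)^2 * (2 * real n + 6 * real j))"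
  proof (rule sum_mono)
    fix j assume j: "j \<in> {3..n}"
    have "(\<Sum>i=1..j-1. y i) \<le> 2 * real n + 6 * real (j-1) - 16" proof -
      have "j - 1 \<in> {1..n}" using j by auto
      from F5[OF this] show ?thesis .
    qed
    also have "\<dots> \<le> 2 * real n + 6 * real j" by auto
    finally show "(y j)^2 * (\<Sum>i=1..j-1. y i) \<le> (y j)^2 * (2 * real n + 6 * real j)"
      by (simp add: mult_left_mono)
  qed
  also have "(\<Sum>j=3..n. (y j)^2 * (2 * real n + 6 * real j)) = 2 * real n * Q + 6 * (\<Sum>j=3..n. real j * (y j)^2)"
    unfolding Q_def by (simp add: algebra_simps sum.distrib sum_distrib_left)
  finally have "S n y \<le> real n * a^2 + 2 * real n * Q + 6 * (\<Sum>j=3..n. real j * (y j)^2)"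
    using Sform F2 unfolding a_def by (simp add: algebra_simps)
  also have "\<dots> \<le> real n * a^2 + 2 * real n * (a * b + 36 * real n) + 6 * (54 * (real n)^2)"
    using D10 D12 mult_left_mono[OF D10, of "2 * real n"] by simp
  also have "\<dots> \<le> (real n)^3 + 396 * (real n)^2"
  proof -
    have "real n * a^2 + 2 * real n * (a*b) + real n * b^2 = (real n)^3"
      unfolding b_def by (simp add: power2_eq_square power3_eq_cube algebra_simps)
    moreover have "real n * b^2 \<ge> 0" by simp
    ultimately show ?thesis by (simp add: power2_eq_square algebra_simps)
  qed
  finally show ?thesis unfolding y_def by simp
qed

theorem lemma7:
  shows "\<exists>C::real. \<forall>n::nat. n \<ge> 2 \<longrightarrow>
     (\<forall>x. x \<in> A n \<and> (\<forall>y\<in>A n. S n (\<lambda>i. real_of_int (y i)) \<le> S n (\<lambda>i. real_of_int (x i)))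
          \<and> x 1 = int n
        \<longrightarrow> S n (\<lambda>i. real_of_int (x i)) \<le> (real n)^3 + C * (real n)^2)"
  by (rule exI[of _ 396]) (auto intro: main_bound)

end
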